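(* Let $(A,E)$ be a $B$-valued Banach noncommutative probability space and $a\in A$. Let $\mathcal C_a(b)=E((1-ba)^{-1}b)$ for $\|b\|<\|a\|^{-1}$, and let $\mathcal C_a^{\langle-1\rangle}$ be its compositional inverse, analytic on a neighborhood of $0$ (it exists because the Fréchet derivative of $\mathcal C_a$ at $0$ is the identity). Then there is a unique $B$-valued analytic function $R_a$ defined on a neighborhood of $0$ in $B$ such that \[ \mathcal C_a^{\langle-1\rangle}(b)=(1+bR_a(b))^{-1}b=b(1+R_a(b)b)^{-1} \] for all $b$ in a neighborhood of $0$.
   Context: $B$ is a unital complex Banach algebra. A $B$-valued Banach noncommutative probability space is a pair $(A,E)$ where $A$ is a unital Banach algebra containing an isometrically embedded copy of $B$ as a unital subalgebra and $E:A\to B$ is a bounded projection with $E(b_1ab_2)=b_1E(a)b_2$ for $a\in A$, $b_1,b_2\in B$. The function $R_a$ is called the R-transform of $a$. *)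

theory Defs
  imports "HOL-Analysis.Analysis"
begin

definition is_unit_el :: "'a::ring_1 \<Rightarrow> bool" where
  "is_unit_el x \<longleftrightarrow> (\<exists>y. x * y = 1 \<and> y * x = 1)"

definition ainv :: "'a::ring_1 \<Rightarrow> 'a" where
  "ainv x = (if is_unit_el x then (THE y. x * y = 1 \<and> y * x = 1) else 0)"

text \<open>Complex scalar multiplication is then
  c . x = kappa c * x.\<close>

definition complex_structure :: "(complex \<Rightarrow> 'a::real_normed_algebra_1) \<Rightarrow> bool" where
  "complex_structure \<kappa> \<longleftrightarrow>
     (\<forall>c d. \<kappa> (c + d) = \<kappa> c + \<kappa> d) \<and>
     (\<forall>c d. \<kappa> (c * d) = \<kappa> c * \<kappa> d) \<and>
     (\<forall>r. \<kappa> (complex_of_real r) = of_real r) \<and>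
     (\<forall>c x. \<kappa> c * x = x * \<kappa> c) \<and>
     (\<forall>c x. norm (\<kappa> c * x) = cmod c * norm x)"

text \<open>Analytic (= Frechet holomorphic) maps on an open set of a complex Banach space:
  Frechet differentiable at every point with complex-linear derivative.\<close>

definition holo_on :: "(complex \<Rightarrow> 'b::real_normed_algebra_1) \<Rightarrow> ('b \<Rightarrow> 'b) \<Rightarrow> 'b set \<Rightarrow> bool" where
  "holo_on \<kappa> f U \<longleftrightarrow> open U \<and>
     (\<forall>x\<in>U. \<exists>L. (f has_derivative L) (at x) \<and> (\<forall>c v. L (\<kappa> c * v) = \<kappa> c * L v))"

definition cauchy_tr :: "('b \<Rightarrow> 'a::real_normed_algebra_1) \<Rightarrow> ('a \<Rightarrow> 'b) \<Rightarrow> 'a \<Rightarrow> 'b \<Rightarrow> 'b" where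
  "cauchy_tr \<iota> E a b = E (ainv (1 - \<iota> b * a) * \<iota> b)"

definition R_rel :: "('b \<Rightarrow> 'b) \<Rightarrow> ('b \<Rightarrow> 'b::real_normed_algebra_1) \<Rightarrow> 'b \<Rightarrow> bool" where
  "R_rel G R b \<longleftrightarrow> is_unit_el (1 + b * R b) \<and> is_unit_el (1 + R b * b) \<and>
     G b = ainv (1 + b * R b) * b \<and> G b = b * ainv (1 + R b * b)"

end

theory Submission
  imports Defs "HOL-Complex_Analysis.Complex_Analysis"
begin


lemma ainv_unique:
  fixes x :: "'a::ring_1"
  assumes "x * y = 1" "y * x = 1"
  shows "is_unit_el x" "ainv x = y"
proof -
  show u: "is_unit_el x" using assms unfolding is_unit_el_def by blast
  have "\<exists>!z. x * z = 1 \<and> z * x = 1"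
  proof
    show "x * y = 1 \<and> y * x = 1" using assms by simp
    fix z assume "x * z = 1 \<and> z * x = 1"
    then have "z = z * (x * y)" using assms by simp
    also have "\<dots> = (z * x) * y" by (simp add: mult.assoc)
    finally show "z = y" using \<open>x * z = 1 \<and> z * x = 1\<close> by simp
  qed
  then show "ainv x = y" using u assms unfolding ainv_def by (metis (mono_tags, lifting) the_equality)
qed

lemma ainv_props:
  fixes x :: "'a::ring_1"
  assumes "is_unit_el x"
  shows "x * ainv x = 1" "ainv x * x = 1"
proof -
  obtain y where y: "x * y = 1" "y * x = 1" using assms unfolding is_unit_el_def by blast
  then have "ainv x = y" using ainv_unique by blast
  then show "x * ainv x = 1" "ainv x * x = 1" using y by auto
qed

lemma neumann:
  fixes z :: "'a::{real_normed_algebra_1,banach}"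
  assumes "norm z < 1"
  shows "is_unit_el (1 - z)" "norm (ainv (1 - z)) \<le> 1 / (1 - norm z)"
proof -
  have sm: "summable (\<lambda>n. z ^ n)" using complete_algebra_summable_geometric[OF assms] .
  define S where "S = (\<Sum>n. z ^ n)"
  have h1: "(\<Sum>n. z ^ Suc n) = S - 1" using suminf_split_head[OF sm] S_def by simp
  have "z * S = (\<Sum>n. z * z ^ n)" unfolding S_def using suminf_mult[OF sm] by simp
  then have zS: "z * S = S - 1" using h1 by simp
  have "S * z = (\<Sum>n. z ^ n * z)" unfolding S_def using suminf_mult2[OF sm] by simp
  then have Sz: "S * z = S - 1" using h1 by (simp add: power_commutes)
  have a: "(1 - z) * S = 1" using zS by (simp add: algebra_simps)
  have b: "S * (1 - z) = 1" using Sz by (simp add: algebra_simps)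
  show "is_unit_el (1 - z)" using ainv_unique[OF a b] by simp
  have ai: "ainv (1 - z) = S" using ainv_unique[OF a b] by simp
  have nz: "norm z ^ n \<ge> norm (z ^ n)" for n by (rule norm_power_ineq)
  have sr: "summable (\<lambda>n. norm z ^ n)" using assms by (simp add: summable_geometric)
  have sn: "summable (\<lambda>n. norm (z ^ n))"
    by (rule summable_comparison_test[OF _ sr]) (use nz in auto)
  have "norm S \<le> (\<Sum>n. norm (z ^ n))" unfolding S_def by (rule summable_norm[OF sn])
  also have "\<dots> \<le> (\<Sum>n. norm z ^ n)" by (rule suminf_le[OF nz sn sr])
  also have "\<dots> = 1 / (1 - norm z)" using suminf_geometric[of "norm z"] assms by simp
  finally show "norm (ainv (1 - z)) \<le> 1 / (1 - norm z)" using ai by simp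
qed

lemma unit_mult:
  fixes x y :: "'a::ring_1"
  assumes "is_unit_el x" "is_unit_el y"
  shows "is_unit_el (x * y)" "ainv (x * y) = ainv y * ainv x"
proof -
  note px = ainv_props[OF assms(1)] and py = ainv_props[OF assms(2)]
  have a: "(x * y) * (ainv y * ainv x) = 1"
    by (metis mult.assoc mult_1_left px(1) py(1))
  have b: "(ainv y * ainv x) * (x * y) = 1"
    by (metis mult.assoc mult_1_left px(2) py(2))
  show "is_unit_el (x * y)" "ainv (x * y) = ainv y * ainv x" using ainv_unique[OF a b] by auto
qed

lemma unit_near:
  fixes x y :: "'a::{real_normed_algebra_1,banach}"
  assumes u: "is_unit_el x" and d: "norm (ainv x) * norm (y - x) \<le> 1/2"
  shows "is_unit_el y" "norm (ainv y) \<le> 2 * norm (ainv x)"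
proof -
  note px = ainv_props[OF u]
  define z where "z = ainv x * (x - y)"
  have nz: "norm z \<le> 1/2"
    using d norm_mult_ineq[of "ainv x" "x - y"] by (simp add: z_def norm_minus_commute)
  have yx: "y = x * (1 - z)" unfolding z_def by (simp add: algebra_simps px mult.assoc[symmetric])
  note n = neumann[of z]
  have u1: "is_unit_el (1 - z)" using n nz by simp
  show uy: "is_unit_el y" using unit_mult(1)[OF u u1] yx by simp
  have "ainv y = ainv (1 - z) * ainv x" using unit_mult(2)[OF u u1] yx by simp
  then have "norm (ainv y) \<le> norm (ainv (1 - z)) * norm (ainv x)" by (simp add: norm_mult_ineq)
  also have "\<dots> \<le> 2 * norm (ainv x)"
  proof (rule mult_right_mono)
    have "norm (ainv (1 - z)) \<le> 1 / (1 - norm z)" using n nz by simp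
    also have "\<dots> \<le> 2" using nz by (simp add: field_simps)
    finally show "norm (ainv (1 - z)) \<le> 2" .
  qed simp
  finally show "norm (ainv y) \<le> 2 * norm (ainv x)" .
qed

lemma ainv_diff:
  fixes x y :: "'a::ring_1"
  assumes "is_unit_el x" "is_unit_el y"
  shows "ainv y - ainv x = ainv y * (x - y) * ainv x"
proof -
  note px = ainv_props[OF assms(1)] and py = ainv_props[OF assms(2)]
  have "ainv y * (x - y) * ainv x = ainv y * x * ainv x - ainv y * y * ainv x"
    by (simp add: algebra_simps)
  also have "\<dots> = ainv y - ainv x" using px py by (simp add: mult.assoc)
  finally show ?thesis by simp
qed

lemma norm_mult3:
  fixes p q r :: "'a::real_normed_algebra"
  shows "norm (p * q * r) \<le> norm p * norm q * norm r"
proof -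
  have "norm (p*q*r) \<le> norm (p*q) * norm r" by (rule norm_mult_ineq)
  also have "\<dots> \<le> norm p * norm q * norm r" by (rule mult_right_mono[OF norm_mult_ineq norm_ge_zero])
  finally show ?thesis .
qed

lemma ainv_cont:
  fixes x :: "'a::{real_normed_algebra_1,banach}"
  assumes u: "is_unit_el x"
  shows "isCont ainv x"
proof -
  define K where "K = norm (ainv x)"
  have K0: "K \<ge> 0" unfolding K_def by simp
  have ev: "\<forall>\<^sub>F y in at x. norm (ainv y - ainv x) \<le> 2 * K * K * norm (y - x)"
  proof -
      have "\<forall>\<^sub>F y in at x. dist y x < 1 / (2 * K + 2)"
      unfolding eventually_at by (rule exI[of _ "1 / (2 * K + 2)"]) (use K0 in auto)
    then show ?thesis
    proof (rule eventually_mono)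
      fix y assume "dist y x < 1 / (2 * K + 2)"
      then have ny: "norm (y - x) \<le> 1 / (2 * K + 2)" by (simp add: dist_norm)
      have d: "K * norm (y - x) \<le> 1/2"
      proof -
        have "K * norm (y - x) \<le> K * (1 / (2 * K + 2))" using mult_left_mono[OF ny K0] .
        also have "\<dots> \<le> 1/2" using K0 by (simp add: field_simps)
        finally show ?thesis .
      qed
      note uy = unit_near[OF u, of y, folded K_def, OF d]
      have "norm (ainv y - ainv x) = norm (ainv y * (x - y) * ainv x)" using ainv_diff[OF u uy(1)] by simp
      also have "\<dots> \<le> norm (ainv y) * norm (x - y) * K"
        unfolding K_def by (rule norm_mult3)
      also have "\<dots> \<le> (2 * K) * norm (y - x) * K"
        using uy(2) K0 by (simp add: mult_right_mono norm_minus_commute)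
      finally show "norm (ainv y - ainv x) \<le> 2 * K * K * norm (y - x)" by (simp add: mult_ac)
    qed
  qed
  have "((\<lambda>y. 2 * K * K * norm (y - x)) \<longlongrightarrow> 2 * K * K * norm (x - x)) (at x)"
    by (intro tendsto_intros)
  then have "((\<lambda>y. 2 * K * K * norm (y - x)) \<longlongrightarrow> 0) (at x)" by simp
  then have "((\<lambda>y. ainv y - ainv x) \<longlongrightarrow> 0) (at x)"
    by (rule Lim_null_comparison[OF ev])
  then show ?thesis unfolding isCont_def by (simp add: LIM_zero_iff)
qed

lemma ainv_deriv:
  fixes x :: "'a::{real_normed_algebra_1,banach}"
  assumes u: "is_unit_el x"
  shows "(ainv has_derivative (\<lambda>h. - (ainv x * h * ainv x))) (at x)"
  unfolding has_derivative_iff_norm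
proof
  show "bounded_linear (\<lambda>h. - (ainv x * h * ainv x))"
    by (rule bounded_linear_minus, rule bounded_linear_compose[OF bounded_linear_mult_left bounded_linear_mult_right])
  define K where "K = norm (ainv x)"
  have K0: "K \<ge> 0" unfolding K_def by simp
  have c: "isCont ainv x" by (rule ainv_cont[OF u])
  have ev: "\<forall>\<^sub>F y in at x. norm (norm (ainv y - ainv x - - (ainv x * (y - x) * ainv x)) / norm (y - x))
             \<le> K * norm (ainv y - ainv x)"
  proof -
      have "\<forall>\<^sub>F y in at x. dist y x < 1 / (2 * K + 2)"
      unfolding eventually_at by (rule exI[of _ "1 / (2 * K + 2)"]) (use K0 in auto)
    then show ?thesis
    proof (rule eventually_mono)
      fix y assume "dist y x < 1 / (2 * K + 2)"
      then have ny: "norm (y - x) \<le> 1 / (2 * K + 2)" by (simp add: dist_norm)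
      have d: "K * norm (y - x) \<le> 1/2"
      proof -
        have "K * norm (y - x) \<le> K * (1 / (2 * K + 2))" using mult_left_mono[OF ny K0] .
        also have "\<dots> \<le> 1/2" using K0 by (simp add: field_simps)
        finally show ?thesis .
      qed
      note uy = unit_near[OF u, of y, folded K_def, OF d]
      have d1: "ainv y - ainv x = - (ainv y * (y - x) * ainv x)"
        proof -
          have "ainv y * (x - y) * ainv x = - (ainv y * (y - x) * ainv x)"
            by (simp add: right_diff_distrib left_diff_distrib)
          then show ?thesis using ainv_diff[OF u uy(1)] by simp
        qed
      have d2: "(ainv x - ainv y) * (y - x) * ainv x = ainv x * (y - x) * ainv x - ainv y * (y - x) * ainv x"
        by (simp add: left_diff_distrib)
      have eq: "ainv y - ainv x - - (ainv x * (y - x) * ainv x) = (ainv x - ainv y) * (y - x) * ainv x"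
        unfolding d2 d1 by simp
      have "norm ((ainv x - ainv y) * (y - x) * ainv x) \<le> norm (ainv x - ainv y) * norm (y - x) * K"
        unfolding K_def by (rule norm_mult3)
      then have "norm (ainv y - ainv x - - (ainv x * (y - x) * ainv x)) \<le> K * norm (ainv y - ainv x) * norm (y - x)"
        unfolding eq using norm_minus_commute[of "ainv x" "ainv y"] by (simp add: mult_ac)
      then have "norm (ainv y - ainv x - - (ainv x * (y - x) * ainv x)) / norm (y - x) \<le> K * norm (ainv y - ainv x)"
        by (cases "norm (y - x) = 0") (simp_all add: divide_le_eq)
      then show "norm (norm (ainv y - ainv x - - (ainv x * (y - x) * ainv x)) / norm (y - x)) \<le> K * norm (ainv y - ainv x)"
        by simp
    qed
  qed
  have "((\<lambda>y. ainv y) \<longlongrightarrow> ainv x) (at x)" using c unfolding isCont_def .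
  then have "((\<lambda>y. K * norm (ainv y - ainv x)) \<longlongrightarrow> K * norm (ainv x - ainv x)) (at x)"
    by (intro tendsto_intros)
  then have "((\<lambda>y. K * norm (ainv y - ainv x)) \<longlongrightarrow> 0) (at x)" by simp
  then have "((\<lambda>y. norm (ainv y - ainv x - - (ainv x * (y - x) * ainv x)) / norm (y - x)) \<longlongrightarrow> 0) (at x)"
    by (rule Lim_null_comparison[OF ev])
  then show "((\<lambda>y. norm (ainv y - ainv x - - (ainv x * (y - x) * ainv x)) / norm (y - x)) \<longlongrightarrow> 0) (at x within UNIV)"
    by simp
qed




definition goodg :: "'a::real_normed_vector \<Rightarrow> ('a \<times> real) set \<Rightarrow> bool" where
 "goodg v g \<longleftrightarrow> (\<forall>x r s. (x,r)\<in>g \<longrightarrow> (x,s)\<in>g \<longrightarrow> r = s) \<and>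
   (\<forall>x r y s. (x,r)\<in>g \<longrightarrow> (y,s)\<in>g \<longrightarrow> (x+y, r+s)\<in>g) \<and>
   (\<forall>x r c. (x,r)\<in>g \<longrightarrow> (c *\<^sub>R x, c*r) \<in> g) \<and>
   (\<forall>x r. (x,r)\<in>g \<longrightarrow> r \<le> norm x) \<and> (v, norm v) \<in> g"

lemma goodgI:
  assumes "\<And>x r s. (x,r)\<in>g \<Longrightarrow> (x,s)\<in>g \<Longrightarrow> r = s"
    "\<And>x r y s. (x,r)\<in>g \<Longrightarrow> (y,s)\<in>g \<Longrightarrow> (x+y, r+s)\<in>g"
    "\<And>x r c. (x,r)\<in>g \<Longrightarrow> (c *\<^sub>R x, c*r) \<in> g"
    "\<And>x r. (x,r)\<in>g \<Longrightarrow> r \<le> norm x" "(v, norm v) \<in> g"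
  shows "goodg v g"
  unfolding goodg_def
  apply (intro conjI allI impI)
      apply (erule (1) assms(1))
     apply (erule (1) assms(2))
    apply (erule assms(3))
   apply (erule assms(4))
  apply (rule assms(5))
  done

lemma goodgD:
  assumes "goodg v g"
  shows "\<And>x r s. (x,r)\<in>g \<Longrightarrow> (x,s)\<in>g \<Longrightarrow> r = s"
    "\<And>x r y s. (x,r)\<in>g \<Longrightarrow> (y,s)\<in>g \<Longrightarrow> (x+y, r+s)\<in>g"
    "\<And>x r c. (x,r)\<in>g \<Longrightarrow> (c *\<^sub>R x, c*r) \<in> g"
    "\<And>x r. (x,r)\<in>g \<Longrightarrow> r \<le> norm x" "(v, norm v) \<in> g"
proof -
  have h: "(\<forall>x r s. (x,r)\<in>g \<longrightarrow> (x,s)\<in>g \<longrightarrow> r = s) \<and>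
   (\<forall>x r y s. (x,r)\<in>g \<longrightarrow> (y,s)\<in>g \<longrightarrow> (x+y, r+s)\<in>g) \<and>
   (\<forall>x r c. (x,r)\<in>g \<longrightarrow> (c *\<^sub>R x, c*r) \<in> g) \<and>
   (\<forall>x r. (x,r)\<in>g \<longrightarrow> r \<le> norm x) \<and> (v, norm v) \<in> g" using assms unfolding goodg_def .
  show "\<And>x r s. (x,r)\<in>g \<Longrightarrow> (x,s)\<in>g \<Longrightarrow> r = s" by (rule conjunct1[OF h, rule_format])
  show "\<And>x r y s. (x,r)\<in>g \<Longrightarrow> (y,s)\<in>g \<Longrightarrow> (x+y, r+s)\<in>g"
    by (rule conjunct1[OF conjunct2[OF h], rule_format])
  show "\<And>x r c. (x,r)\<in>g \<Longrightarrow> (c *\<^sub>R x, c*r) \<in> g"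
    by (rule conjunct1[OF conjunct2[OF conjunct2[OF h]], rule_format])
  show "\<And>x r. (x,r)\<in>g \<Longrightarrow> r \<le> norm x"
    by (rule conjunct1[OF conjunct2[OF conjunct2[OF conjunct2[OF h]]], rule_format])
  show "(v, norm v) \<in> g" by (rule conjunct2[OF conjunct2[OF conjunct2[OF conjunct2[OF h]]]])
qed

lemma goodg_base:
  fixes v :: "'a::real_normed_vector"
  assumes "v \<noteq> 0"
  shows "goodg v {(c *\<^sub>R v, c * norm v) | c. True}"
proof (rule goodgI)
  let ?g = "{(c *\<^sub>R v, c * norm v) | c. True}"
  have mem: "p \<in> ?g \<longleftrightarrow> (\<exists>c. p = (c *\<^sub>R v, c * norm v))" for p by simp
  fix x r s assume "(x,r) \<in> ?g" "(x,s) \<in> ?g"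
  then obtain c d where cd: "(x,r) = (c *\<^sub>R v, c * norm v)" "(x,s) = (d *\<^sub>R v, d * norm v)"
    unfolding mem by blast
  then have "c *\<^sub>R v = d *\<^sub>R v" by simp
  then have "c = d" using assms by simp
  then show "r = s" using cd by simp
next
  let ?g = "{(c *\<^sub>R v, c * norm v) | c. True}"
  have mem: "p \<in> ?g \<longleftrightarrow> (\<exists>c. p = (c *\<^sub>R v, c * norm v))" for p by simp
  fix x r y s assume "(x,r) \<in> ?g" "(y,s) \<in> ?g"
  then obtain c d where cd: "(x,r) = (c *\<^sub>R v, c * norm v)" "(y,s) = (d *\<^sub>R v, d * norm v)"
    unfolding mem by blast
  then have "(x+y, r+s) = ((c+d) *\<^sub>R v, (c+d) * norm v)" by (simp add: scaleR_add_left distrib_right)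
  then show "(x+y, r+s) \<in> ?g" unfolding mem by blast
next
  let ?g = "{(c *\<^sub>R v, c * norm v) | c. True}"
  have mem: "p \<in> ?g \<longleftrightarrow> (\<exists>c. p = (c *\<^sub>R v, c * norm v))" for p by simp
  fix x r e assume "(x,r) \<in> ?g"
  then obtain c where cd: "(x,r) = (c *\<^sub>R v, c * norm v)" unfolding mem by blast
  then have "(e *\<^sub>R x, e*r) = ((e*c) *\<^sub>R v, (e*c) * norm v)" by simp
  then show "(e *\<^sub>R x, e*r) \<in> ?g" unfolding mem by blast
next
  let ?g = "{(c *\<^sub>R v, c * norm v) | c. True}"
  have mem: "p \<in> ?g \<longleftrightarrow> (\<exists>c. p = (c *\<^sub>R v, c * norm v))" for p by simp
  fix x r assume "(x,r) \<in> ?g"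
  then obtain c where cd: "(x,r) = (c *\<^sub>R v, c * norm v)" unfolding mem by blast
  have "c * norm v \<le> \<bar>c\<bar> * norm v" by (rule mult_right_mono) simp_all
  then show "r \<le> norm x" using cd by simp
next
  let ?g = "{(c *\<^sub>R v, c * norm v) | c. True}"
  have mem: "p \<in> ?g \<longleftrightarrow> (\<exists>c. p = (c *\<^sub>R v, c * norm v))" for p by simp
  have "(v, norm v) = (1 *\<^sub>R v, 1 * norm v)" by simp
  then show "(v, norm v) \<in> ?g" unfolding mem by blast
qed

lemma goodg_union:
  assumes "C \<noteq> {}" "\<forall>g\<in>C. goodg v g" "\<forall>A\<in>C. \<forall>B\<in>C. A \<subseteq> B \<or> B \<subseteq> A"
  shows "goodg v (\<Union>C)"
proof -
  have two: "\<exists>g\<in>C. p \<in> g \<and> q \<in> g" if pC: "p \<in> \<Union>C" and qC: "q \<in> \<Union>C" for p q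
  proof -
    obtain A where A: "A\<in>C" "p\<in>A" using pC by blast
    obtain B where B: "B\<in>C" "q\<in>B" using qC by blast
    have "A \<subseteq> B \<or> B \<subseteq> A" using assms(3) A(1) B(1) by blast
    then show ?thesis
    proof
      assume "A \<subseteq> B" then show ?thesis using A B by blast
    next
      assume "B \<subseteq> A" then show ?thesis using A B by blast
    qed
  qed
  obtain g0 where g0: "g0 \<in> C" using assms(1) by blast
  have gd: "goodg v g" if "g \<in> C" for g using assms(2) that by blast
  show ?thesis
  proof (rule goodgI)
    fix x r s assume "(x,r) \<in> \<Union>C" "(x,s) \<in> \<Union>C"
    then obtain g where "g\<in>C" "(x,r)\<in>g" "(x,s)\<in>g" using two by blast
    then show "r = s" using goodgD(1)[OF gd] by blast
  next
    fix x r y s assume "(x,r) \<in> \<Union>C" "(y,s) \<in> \<Union>C"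
    then obtain g where "g\<in>C" "(x,r)\<in>g" "(y,s)\<in>g" using two by blast
    then show "(x+y,r+s) \<in> \<Union>C" using goodgD(2)[OF gd] by blast
  next
    fix x r c assume "(x,r) \<in> \<Union>C"
    then obtain g where "g\<in>C" "(x,r)\<in>g" by blast
    then show "(c *\<^sub>R x, c*r) \<in> \<Union>C" using goodgD(3)[OF gd] by blast
  next
    fix x r assume "(x,r) \<in> \<Union>C"
    then obtain g where "g\<in>C" "(x,r)\<in>g" by blast
    then show "r \<le> norm x" using goodgD(4)[OF gd] by blast
  next
    show "(v, norm v) \<in> \<Union>C" using goodgD(5)[OF gd[OF g0]] g0 by blast
  qed
qed

lemma goodg_extend:
  fixes v :: "'a::real_normed_vector"
  assumes g: "goodg v M" and y: "\<forall>r. (y,r) \<notin> M"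
  shows "\<exists>M'. goodg v M' \<and> M \<subseteq> M' \<and> M' \<noteq> M"
proof -
  define S where "S = {x. \<exists>r. (x,r)\<in>M}"
  define f where "f x = (THE r. (x,r)\<in>M)" for x
  note fnc = goodgD(1)[OF g] and add = goodgD(2)[OF g] and scl = goodgD(3)[OF g]
    and bnd = goodgD(4)[OF g] and vM = goodgD(5)[OF g]
  have fval: "f x = r" if r: "(x,r)\<in>M" for x r
    unfolding f_def
  proof (rule the_equality)
    show "(x, r) \<in> M" by (rule r)
    show "s = r" if "(x, s) \<in> M" for s using fnc[OF that r] .
  qed
  have fM: "(x, f x) \<in> M" if xS: "x \<in> S" for x
  proof -
    obtain r where r: "(x,r) \<in> M" using xS unfolding S_def by blast
    show ?thesis using r fval[OF r] by simp
  qed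
  have inS: "x \<in> S" if "(x,r) \<in> M" for x r unfolding S_def using that by blast
  have zM: "(0,0) \<in> M" using scl[OF vM, of 0] by simp
  have key: "f x - norm (x - y) \<le> norm (z + y) - f z" if "x\<in>S" "z\<in>S" for x z
  proof -
    have "(x+z, f x + f z) \<in> M" by (rule add[OF fM[OF that(1)] fM[OF that(2)]])
    then have "f x + f z \<le> norm (x + z)" by (rule bnd)
    also have "norm (x+z) \<le> norm (x - y) + norm (z + y)"
      using norm_triangle_ineq[of "x - y" "z + y"] by simp
    finally show ?thesis by simp
  qed
  define T where "T = (\<lambda>x. f x - norm (x - y)) ` S"
  define c where "c = Sup T"
  have S0: "0 \<in> S" by (rule inS[OF zM])
  have Tne: "T \<noteq> {}" using S0 unfolding T_def by blast
  have Tbdd: "bdd_above T" unfolding T_def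
  proof (rule bdd_aboveI2)
    fix x assume "x \<in> S" then show "f x - norm (x - y) \<le> norm (0 + y) - f 0" by (rule key[OF _ S0])
  qed
  have c_lo: "f x - norm (x - y) \<le> c" if "x\<in>S" for x
    unfolding c_def by (rule cSup_upper[OF _ Tbdd]) (unfold T_def, rule imageI, rule that)
  have c_hi: "c \<le> norm (z + y) - f z" if zS: "z\<in>S" for z
    unfolding c_def
  proof (rule cSup_least[OF Tne])
    fix t assume "t \<in> T"
    then obtain x where "x \<in> S" "t = f x - norm (x - y)" unfolding T_def by blast
    then show "t \<le> norm (z + y) - f z" using key[OF _ zS] by simp
  qed
  have yS: "y \<notin> S" using y unfolding S_def by blast
  define M' where "M' = {p. \<exists>x r t. (x,r)\<in>M \<and> p = (x + t *\<^sub>R y, r + t * c)}"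
  have inM': "(x + t *\<^sub>R y, r + t * c) \<in> M'" if "(x,r) \<in> M" for x r t
    unfolding M'_def using that by blast
  have outM': "\<exists>x1 r1 t. (x1,r1)\<in>M \<and> x = x1 + t *\<^sub>R y \<and> r = r1 + t * c" if "(x,r) \<in> M'" for x r
    using that unfolding M'_def by simp
  have M'good: "goodg v M'"
  proof (rule goodgI)
    fix x r s assume a1: "(x,r) \<in> M'" and a2: "(x,s)\<in>M'"
    obtain x1 r1 t1 where h1: "(x1,r1)\<in>M" "x = x1 + t1 *\<^sub>R y" "r = r1 + t1 * c"
      using outM'[OF a1] by blast
    obtain x2 r2 t2 where h2: "(x2,r2)\<in>M" "x = x2 + t2 *\<^sub>R y" "s = r2 + t2 * c"
      using outM'[OF a2] by blast
    have tt: "t1 = t2"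
    proof (rule ccontr)
      assume ne: "t1 \<noteq> t2"
      have e: "(t1 - t2) *\<^sub>R y = x2 + (-1) *\<^sub>R x1"
      proof -
        have "x1 + t1 *\<^sub>R y = x2 + t2 *\<^sub>R y" using h1(2) h2(2) by simp
        then show ?thesis by (simp add: scaleR_diff_left algebra_simps)
      qed
      have "(1/(t1-t2)) *\<^sub>R ((t1 - t2) *\<^sub>R y) = y" using ne by simp
      then have ye: "y = (1/(t1-t2)) *\<^sub>R (x2 + (-1) *\<^sub>R x1)" unfolding e by simp
      have "(x2 + (-1) *\<^sub>R x1, r2 + (-1)*r1) \<in> M" by (rule add[OF h2(1) scl[OF h1(1)]])
      from scl[OF this, of "1/(t1-t2)"] have "y \<in> S" unfolding ye by (rule inS)
      with yS show False by blast
    qed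
    then have "x1 = x2" using h1(2) h2(2) by simp
    then have "r1 = r2" using fnc h1(1) h2(1) by blast
    then show "r = s" using h1(3) h2(3) tt by simp
  next
    fix x r z s assume a1: "(x,r) \<in> M'" and a2: "(z,s)\<in>M'"
    obtain x1 r1 t1 where h1: "(x1,r1)\<in>M" "x = x1 + t1 *\<^sub>R y" "r = r1 + t1 * c"
      using outM'[OF a1] by blast
    obtain x2 r2 t2 where h2: "(x2,r2)\<in>M" "z = x2 + t2 *\<^sub>R y" "s = r2 + t2 * c"
      using outM'[OF a2] by blast
    have "x + z = (x1 + x2) + (t1 + t2) *\<^sub>R y" using h1(2) h2(2) by (simp add: scaleR_add_left)
    moreover have "r + s = (r1 + r2) + (t1+t2)*c" using h1(3) h2(3) by (simp add: distrib_right)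
    ultimately show "(x+z, r+s) \<in> M'" using inM'[OF add[OF h1(1) h2(1)], of "t1 + t2"] by simp
  next
    fix x r e assume a1: "(x,r) \<in> M'"
    obtain x1 r1 t1 where h: "(x1,r1)\<in>M" "x = x1 + t1 *\<^sub>R y" "r = r1 + t1 * c"
      using outM'[OF a1] by blast
    have "e *\<^sub>R x = e *\<^sub>R x1 + (e*t1) *\<^sub>R y" using h(2) by (simp add: scaleR_add_right)
    moreover have "e * r = e * r1 + (e*t1)*c" using h(3) by (simp add: distrib_left)
    ultimately show "(e *\<^sub>R x, e*r) \<in> M'" using inM'[OF scl[OF h(1), of e], of "e * t1"] by simp
  next
    fix x r assume a1: "(x,r) \<in> M'"
    obtain x1 r1 t where h: "(x1,r1)\<in>M" "x = x1 + t *\<^sub>R y" "r = r1 + t * c"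
      using outM'[OF a1] by blast
    have x1S: "x1 \<in> S" by (rule inS[OF h(1)])
    have fx1: "f x1 = r1" by (rule fval[OF h(1)])
    consider "t = 0" | "t > 0" | "t < 0" by linarith
    then show "r \<le> norm x"
    proof cases
      case 1 then show ?thesis using h bnd[OF h(1)] by simp
    next
      case 2
      define z where "z = (1/t) *\<^sub>R x1"
      have zM': "(z, (1/t) * r1) \<in> M" unfolding z_def by (rule scl[OF h(1)])
      have fz: "f z = r1 / t" using fval[OF zM'] by simp
      have "c \<le> norm (z + y) - r1/t" using c_hi[OF inS[OF zM']] fz by simp
      then have "t * c \<le> t * norm (z + y) - r1" using 2 by (simp add: field_simps)
      also have "t * norm (z + y) = norm (t *\<^sub>R (z + y))" using 2 by simp
      also have "t *\<^sub>R (z + y) = x" using 2 h(2) by (simp add: z_def scaleR_add_right)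
      finally show ?thesis using h(3) by simp
    next
      case 3
      define u where "u = -t"
      have u: "u > 0" using 3 u_def by simp
      define z where "z = (1/u) *\<^sub>R x1"
      have zM': "(z, (1/u) * r1) \<in> M" unfolding z_def by (rule scl[OF h(1)])
      have fz: "f z = r1 / u" using fval[OF zM'] by simp
      have "r1/u - norm (z - y) \<le> c" using c_lo[OF inS[OF zM']] fz by simp
      then have "r1 - u * norm (z - y) \<le> u * c" using u by (simp add: field_simps)
      moreover have "u *\<^sub>R (z - y) = x" using u h(2) by (simp add: z_def u_def scaleR_diff_right)
      then have "norm x = u * norm (z - y)" using u by auto
      ultimately show ?thesis using h(3) u_def by simp
    qed
  next
    show "(v, norm v) \<in> M'" using inM'[OF vM, of 0] by simp
  qed
  have sub: "M \<subseteq> M'"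
  proof
    fix p assume "p \<in> M"
    moreover obtain x r where "p = (x, r)" by (cases p)
    ultimately show "p \<in> M'" using inM'[of x r 0] by simp
  qed
  have "(y, c) \<in> M'" using inM'[OF zM, of 1] by simp
  then have "M' \<noteq> M" using y by blast
  then show ?thesis using M'good sub by blast
qed

lemma hahn_banach_norming:
  fixes v :: "'a::real_normed_vector"
  shows "\<exists>l. bounded_linear l \<and> l v = norm v"
proof (cases "v = 0")
  case True then show ?thesis by (intro exI[of _ "\<lambda>x. 0"]) simp
next
  case False
  define A where "A = {g. goodg v g}"
  have "\<forall>C\<in>chains A. \<exists>U\<in>A. \<forall>X\<in>C. X \<subseteq> U"
  proof
    fix C assume C: "C \<in> chains A"
    show "\<exists>U\<in>A. \<forall>X\<in>C. X \<subseteq> U"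
    proof (cases "C = {}")
      case True then show ?thesis using goodg_base[OF False] A_def by blast
    next
      case ne: False
      have "goodg v (\<Union>C)" using goodg_union[OF ne] C unfolding chains_def chain_subset_def A_def by blast
      then show ?thesis unfolding A_def by blast
    qed
  qed
  from Zorn_Lemma2[OF this] obtain M where M: "M \<in> A" "\<forall>X\<in>A. M \<subseteq> X \<longrightarrow> X = M" by blast
  have g: "goodg v M" using M A_def by blast
  have tot: "\<exists>r. (x,r)\<in>M" for x
  proof (rule ccontr)
    assume "\<not> (\<exists>r. (x,r)\<in>M)"
    then obtain M' where "goodg v M'" "M \<subseteq> M'" "M' \<noteq> M" using goodg_extend[OF g] by blast
    then show False using M A_def by blast
  qed
  note fnc = goodgD(1)[OF g] and add = goodgD(2)[OF g] and scl = goodgD(3)[OF g]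
    and bnd = goodgD(4)[OF g] and vM = goodgD(5)[OF g]
  define l where "l x = (THE r. (x,r)\<in>M)" for x
  have lM: "(x, l x) \<in> M" for x using tot[of x] fnc unfolding l_def by (metis theI)
  have lval: "l x = r" if "(x,r)\<in>M" for x r using fnc lM that by blast
  have "bounded_linear l"
  proof (rule bounded_linear_intro[where K=1])
    show "l (x + y) = l x + l y" for x y using lval[OF add[OF lM lM]] .
    show "l (r *\<^sub>R x) = r *\<^sub>R l x" for r x using lval[OF scl[OF lM]] by simp
    show "norm (l x) \<le> norm x * 1" for x
    proof -
      have "l x \<le> norm x" using bnd[OF lM] .
      moreover have "- l x \<le> norm x" using bnd[OF scl[OF lM[of x], of "-1"]] by simp
      ultimately show ?thesis by simp
    qed
  qed
  moreover have "l v = norm v" using lval[OF vM] .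
  ultimately show ?thesis by blast
qed




definition clin :: "(complex \<Rightarrow> 'x::times) \<Rightarrow> (complex \<Rightarrow> 'y::times) \<Rightarrow> ('x \<Rightarrow> 'y) \<Rightarrow> bool" where
  "clin \<sigma> \<tau> L \<longleftrightarrow> (\<forall>c v. L (\<sigma> c * v) = \<tau> c * L v)"

definition cen :: "(complex \<Rightarrow> 'y::times) \<Rightarrow> bool" where
  "cen \<tau> \<longleftrightarrow> (\<forall>c x. \<tau> c * x = x * \<tau> c)"

lemma clin_zero: "clin \<sigma> (\<tau>::complex \<Rightarrow> 'y::ring_1) (\<lambda>h. 0)"
  unfolding clin_def by simp

lemma clin_add: "clin \<sigma> (\<tau>::complex \<Rightarrow> 'y::ring_1) f \<Longrightarrow> clin \<sigma> \<tau> g \<Longrightarrow> clin \<sigma> \<tau> (\<lambda>h. f h + g h)"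
  unfolding clin_def by (simp add: distrib_left)

lemma clin_diff: "clin \<sigma> (\<tau>::complex \<Rightarrow> 'y::ring_1) f \<Longrightarrow> clin \<sigma> \<tau> g \<Longrightarrow> clin \<sigma> \<tau> (\<lambda>h. f h - g h)"
  unfolding clin_def by (simp add: right_diff_distrib)

lemma clin_minus: "clin \<sigma> (\<tau>::complex \<Rightarrow> 'y::ring_1) f \<Longrightarrow> clin \<sigma> \<tau> (\<lambda>h. - f h)"
  unfolding clin_def by simp

lemma clin_rmul: "clin \<sigma> (\<tau>::complex \<Rightarrow> 'y::ring_1) f \<Longrightarrow> clin \<sigma> \<tau> (\<lambda>h. f h * q)"
  unfolding clin_def by (simp add: mult.assoc)

lemma clin_lmul: "cen (\<tau>::complex \<Rightarrow> 'y::ring_1) \<Longrightarrow> clin \<sigma> \<tau> f \<Longrightarrow> clin \<sigma> \<tau> (\<lambda>h. p * f h)"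
  unfolding clin_def cen_def
proof (intro allI)
  assume c: "\<forall>c x. \<tau> c * x = x * \<tau> c" and f: "\<forall>c v. f (\<sigma> c * v) = \<tau> c * f v"
  fix c v
  have "p * f (\<sigma> c * v) = (p * \<tau> c) * f v" using f by (simp add: mult.assoc)
  also have "p * \<tau> c = \<tau> c * p" using c by simp
  finally show "p * f (\<sigma> c * v) = \<tau> c * (p * f v)" by (simp add: mult.assoc)
qed

lemma clin_ident: "clin \<sigma> \<sigma> (\<lambda>h. h)"
  unfolding clin_def by simp

lemma rel_alg:
  fixes w b F :: "'b::ring_1"
  assumes b: "b = w + w * F * w" and u1: "is_unit_el (1 + F * w)" and u2: "is_unit_el (1 + w * F)"
  shows "is_unit_el (1 + b * (ainv (1 + F * w) * F)) \<and> is_unit_el (1 + (ainv (1 + F * w) * F) * b)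
    \<and> w = ainv (1 + b * (ainv (1 + F * w) * F)) * b \<and> w = b * ainv (1 + (ainv (1 + F * w) * F) * b)"
proof -
  define R where "R = ainv (1 + F * w) * F"
  note p1 = ainv_props[OF u1] and p2 = ainv_props[OF u2]
  have b1: "b = w * (1 + F * w)" using b by (simp only: distrib_left mult_1_right mult.assoc)
  have b2: "b = (1 + w * F) * w" using b by (simp only: distrib_right mult_1_left mult.assoc)
  have bR: "b * R = w * F"
  proof -
    have "b * R = w * ((1 + F * w) * ainv (1 + F * w)) * F" unfolding b1 R_def by (simp only: mult.assoc)
    then show ?thesis by (simp only: p1 mult_1_right)
  qed
  have Rb: "R * b = F * w"
  proof -
    have c: "F * (1 + w * F) = (1 + F * w) * F" by (simp only: distrib_left distrib_right mult_1_left mult_1_right mult.assoc)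
    have "R * b = ainv (1 + F * w) * (F * (1 + w * F)) * w" unfolding b2 R_def by (simp only: mult.assoc)
    also have "\<dots> = (ainv (1 + F * w) * (1 + F * w)) * F * w" unfolding c by (simp only: mult.assoc)
    also have "\<dots> = F * w" by (simp only: p1 mult_1_left)
    finally show ?thesis .
  qed
  have e1: "w = ainv (1 + b * R) * b"
  proof -
    have "ainv (1 + b * R) * b = (ainv (1 + w * F) * (1 + w * F)) * w" unfolding bR by (subst b2) (simp only: mult.assoc)
    then show ?thesis by (simp only: p2 mult_1_left)
  qed
  have e2: "w = b * ainv (1 + R * b)"
  proof -
    have "b * ainv (1 + R * b) = w * ((1 + F * w) * ainv (1 + F * w))" unfolding Rb by (subst b1) (simp only: mult.assoc)
    then show ?thesis by (simp only: p1 mult_1_right)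
  qed
  have "is_unit_el (1 + b * R)" unfolding bR by (rule u2)
  moreover have "is_unit_el (1 + R * b)" unfolding Rb by (rule u1)
  ultimately show ?thesis using e1 e2 unfolding R_def by blast
qed

lemma rel_unique:
  fixes y :: "'b::real_normed_algebra_1"
  assumes r1: "R_rel G R1 y" and r2: "R_rel G R2 y" and u: "is_unit_el y"
  shows "R1 y = R2 y"
proof -
  define g where "g = G y"
  have u1: "is_unit_el (1 + y * R1 y)" and e1: "g = ainv (1 + y * R1 y) * y"
    using r1 unfolding R_rel_def g_def by auto
  have u2: "is_unit_el (1 + y * R2 y)" and e2: "g = ainv (1 + y * R2 y) * y"
    using r2 unfolding R_rel_def g_def by auto
  have v2: "is_unit_el (1 + R2 y * y)" and f2: "g = y * ainv (1 + R2 y * y)"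
    using r2 unfolding R_rel_def g_def by auto
  have a1: "(1 + y * R1 y) * g = y" unfolding e1 using ainv_props[OF u1] by (simp only: mult.assoc[symmetric] mult_1_left)
  have a2: "(1 + y * R2 y) * g = y" unfolding e2 using ainv_props[OF u2] by (simp only: mult.assoc[symmetric] mult_1_left)
  have a3: "g * (1 + R2 y * y) = y" unfolding f2 using ainv_props[OF v2] by (simp only: mult.assoc mult_1_right)
  have "(1 + y * R1 y) * g = (1 + y * R2 y) * g" using a1 a2 by simp
  then have "g + y * R1 y * g = g + y * R2 y * g" by (simp add: distrib_right)
  then have "y * R1 y * g - y * R2 y * g = 0" by simp
  then have "y * (R1 y - R2 y) * g = 0" by (simp add: right_diff_distrib left_diff_distrib)
  then have "y * (R1 y - R2 y) * g * (1 + R2 y * y) = 0" by simp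
  then have "y * (R1 y - R2 y) * (g * (1 + R2 y * y)) = 0" by (simp only: mult.assoc)
  then have "y * (R1 y - R2 y) * y = 0" using a3 by simp
  then have "ainv y * (y * (R1 y - R2 y) * y) * ainv y = 0" by simp
  then have "(ainv y * y) * (R1 y - R2 y) * (y * ainv y) = 0" by (simp only: mult.assoc)
  then have "R1 y - R2 y = 0" using ainv_props[OF u] by simp
  then show ?thesis by simp
qed




lemma kap_facts:
  fixes \<kappa> :: "complex \<Rightarrow> 'b::{real_normed_algebra_1,banach}"
  assumes B: "complex_structure \<kappa>"
  shows "\<kappa> (c + d) = \<kappa> c + \<kappa> d" "\<kappa> (c * d) = \<kappa> c * \<kappa> d"
    "\<kappa> (complex_of_real r) = of_real r" "norm (\<kappa> c * v) = cmod c * norm v"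
    "\<kappa> 1 = 1" "\<kappa> 0 = 0" "norm (\<kappa> c) = cmod c"
proof -
  show kadd: "\<kappa> (c + d) = \<kappa> c + \<kappa> d" using B unfolding complex_structure_def by blast
  show kmul: "\<kappa> (c * d) = \<kappa> c * \<kappa> d" using B unfolding complex_structure_def by blast
  have kreal: "\<kappa> (complex_of_real r) = of_real r" for r using B unfolding complex_structure_def by blast
  then show "\<kappa> (complex_of_real r) = of_real r" .
  have knorm: "norm (\<kappa> c * v) = cmod c * norm v" for c v using B unfolding complex_structure_def by blast
  then show "norm (\<kappa> c * v) = cmod c * norm v" .
  show "\<kappa> 1 = 1" using kreal[of 1] by simp
  show "\<kappa> 0 = 0" using kreal[of 0] by simp
  show "norm (\<kappa> c) = cmod c" using knorm[of c 1] by simp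
qed

lemma kap_bl:
  fixes \<kappa> :: "complex \<Rightarrow> 'b::{real_normed_algebra_1,banach}"
  assumes B: "complex_structure \<kappa>"
  shows "bounded_linear \<kappa>"
proof (rule bounded_linear_intro[where K=1])
  note k = kap_facts[OF B]
  show "\<kappa> (x + y) = \<kappa> x + \<kappa> y" for x y by (rule k(1))
  show "\<kappa> (r *\<^sub>R x) = r *\<^sub>R \<kappa> x" for r x
  proof -
    have "\<kappa> (r *\<^sub>R x) = \<kappa> (complex_of_real r * x)" by (simp only: scaleR_conv_of_real)
    also have "\<dots> = of_real r * \<kappa> x" by (simp only: k(2) k(3))
    finally show ?thesis by (simp only: scaleR_conv_of_real)
  qed
  show "norm (\<kappa> x) \<le> norm x * 1" for x using k(7)[of x] by simp
qed

lemma unit_shift: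
  fixes \<kappa> :: "complex \<Rightarrow> 'b::{real_normed_algebra_1,banach}"
  assumes B: "complex_structure \<kappa>" and a1: "norm x < cmod s"
  shows "is_unit_el (x + \<kappa> s)"
proof -
  note k = kap_facts[OF B]
  have s0: "s \<noteq> 0" using a1 norm_ge_zero[of x] by auto
  have cs: "cmod s > 0" using s0 by simp
  have e1: "\<kappa> s * \<kappa> (inverse s) = 1"
  proof -
    have "\<kappa> s * \<kappa> (inverse s) = \<kappa> (s * inverse s)" by (rule k(2)[symmetric])
    also have "s * inverse s = 1" using s0 by (rule right_inverse)
    finally show ?thesis using k(5) by simp
  qed
  have e2: "\<kappa> (inverse s) * \<kappa> s = 1"
  proof -
    have "\<kappa> (inverse s) * \<kappa> s = \<kappa> (inverse s * s)" by (rule k(2)[symmetric])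
    also have "inverse s * s = 1" using s0 by (rule left_inverse)
    finally show ?thesis using k(5) by simp
  qed
  have uk: "is_unit_el (\<kappa> s)" using ainv_unique(1)[OF e1 e2] .
  define w where "w = \<kappa> (inverse s) * x"
  have "norm w = cmod (inverse s) * norm x" unfolding w_def by (rule k(4))
  also have "\<dots> = norm x / cmod s" by (simp add: norm_inverse divide_inverse_commute)
  finally have nw: "norm w < 1" using a1 cs by simp
  have uw: "is_unit_el (1 + w)" using neumann(1)[of "-w"] nw by simp
  have ye: "x + \<kappa> s = \<kappa> s * (1 + w)"
  proof -
    have "\<kappa> s * (1 + w) = \<kappa> s + (\<kappa> s * \<kappa> (inverse s)) * x"
      unfolding w_def by (simp only: distrib_left mult_1_right mult.assoc)
    also have "\<dots> = \<kappa> s + x" unfolding e1 by simp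
    finally show ?thesis by (simp add: add.commute)
  qed
  show ?thesis unfolding ye by (rule unit_mult(1)[OF uk uw])
qed

lemma functional_C:
  fixes \<kappa> :: "complex \<Rightarrow> 'b::{real_normed_algebra_1,banach}" and l :: "'b \<Rightarrow> real"
  assumes B: "complex_structure \<kappa>" and l: "bounded_linear l"
  defines "\<Lambda> \<equiv> \<lambda>z. complex_of_real (l z) - \<i> * complex_of_real (l (\<kappa> \<i> * z))"
  shows "bounded_linear \<Lambda>" "\<And>t z. \<Lambda> (\<kappa> t * z) = t * \<Lambda> z" "\<And>z. Re (\<Lambda> z) = l z"
proof -
  note k = kap_facts[OF B]
  have kdec: "\<kappa> t = of_real (Re t) + of_real (Im t) * \<kappa> \<i>" for t
  proof -
    have "t = complex_of_real (Re t) + complex_of_real (Im t) * \<i>" by (simp add: complex_eq_iff)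
    then have "\<kappa> t = \<kappa> (complex_of_real (Re t) + complex_of_real (Im t) * \<i>)" by (rule arg_cong)
    also have "\<dots> = of_real (Re t) + of_real (Im t) * \<kappa> \<i>" by (simp only: k(1) k(2) k(3))
    finally show ?thesis .
  qed
  have lsc: "l (\<kappa> t * z) = Re t * l z + Im t * l (\<kappa> \<i> * z)" for t z
  proof -
    have "\<kappa> t * z = Re t *\<^sub>R z + Im t *\<^sub>R (\<kappa> \<i> * z)"
      unfolding kdec[of t] by (simp only: scaleR_conv_of_real distrib_right mult.assoc)
    then have "l (\<kappa> t * z) = l (Re t *\<^sub>R z) + l (Im t *\<^sub>R (\<kappa> \<i> * z))" by (simp only: linear_simps(1)[OF l])
    then show ?thesis by (simp only: linear_simps(5)[OF l] real_scaleR_def)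
  qed
  show "\<Lambda> (\<kappa> t * z) = t * \<Lambda> z" for t z
  proof -
    have e: "\<kappa> \<i> * (\<kappa> t * z) = \<kappa> (\<i> * t) * z" by (simp only: k(2) mult.assoc)
    have l1: "l (\<kappa> t * z) = Re t * l z + Im t * l (\<kappa> \<i> * z)" by (rule lsc)
    have l2: "l (\<kappa> (\<i> * t) * z) = - Im t * l z + Re t * l (\<kappa> \<i> * z)" using lsc[of "\<i> * t" z] by simp
    show ?thesis unfolding \<Lambda>_def e l1 l2 by (simp add: complex_eq_iff algebra_simps)
  qed
  have b1: "bounded_linear (\<lambda>z. complex_of_real (l z))"
    by (rule bounded_linear_compose[OF bounded_linear_of_real l])
  have b2: "bounded_linear (\<lambda>z. l (\<kappa> \<i> * z))"
    by (rule bounded_linear_compose[OF l bounded_linear_mult_right])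
  have b3: "bounded_linear (\<lambda>z. \<i> * complex_of_real (l (\<kappa> \<i> * z)))"
    by (rule bounded_linear_compose[OF bounded_linear_mult_right bounded_linear_compose[OF bounded_linear_of_real b2]])
  show "bounded_linear \<Lambda>"
    unfolding \<Lambda>_def by (rule bounded_linear_sub[OF b1 b3])
  show "Re (\<Lambda> z) = l z" for z unfolding \<Lambda>_def by simp
qed




lemma clin_iota:
  assumes "clin \<kappa> \<kappa> f" "\<And>b1 b2. \<iota> (b1 * b2) = \<iota> b1 * \<iota> b2"
  shows "clin \<kappa> (\<lambda>c. \<iota> (\<kappa> c)) (\<lambda>h. \<iota> (f h))"
  using assms unfolding clin_def by simp

lemma clin_E:
  assumes "clin \<kappa> (\<lambda>c. \<iota> (\<kappa> c)) f" "\<And>c x. E (\<iota> (\<kappa> c) * x) = \<kappa> c * E x"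
  shows "clin \<kappa> \<kappa> (\<lambda>h. E (f h))"
  using assms unfolding clin_def by simp

lemma hdc_mult:
  fixes f g :: "'x::real_normed_algebra \<Rightarrow> 'y::real_normed_algebra_1"
  assumes "(f has_derivative f') (at x)" "clin \<sigma> \<tau> f'" "(g has_derivative g') (at x)" "clin \<sigma> \<tau> g'" "cen \<tau>"
  shows "\<exists>L. ((\<lambda>x. f x * g x) has_derivative L) (at x) \<and> clin \<sigma> \<tau> L"
  using has_derivative_mult[OF assms(1,3)] clin_add[OF clin_lmul[OF assms(5,4), of "f x"] clin_rmul[OF assms(2), of "g x"]]
  by blast

lemma hdc_lconst:
  fixes g :: "'x::real_normed_algebra \<Rightarrow> 'y::real_normed_algebra_1"
  assumes "(g has_derivative g') (at x)" "clin \<sigma> \<tau> g'" "cen \<tau>"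
  shows "\<exists>L. ((\<lambda>x. p * g x) has_derivative L) (at x) \<and> clin \<sigma> \<tau> L"
  using hdc_mult[OF has_derivative_const clin_zero assms(1,2,3)] by simp

lemma hdc_rconst:
  fixes g :: "'x::real_normed_algebra \<Rightarrow> 'y::real_normed_algebra_1"
  assumes "(g has_derivative g') (at x)" "clin \<sigma> \<tau> g'" "cen \<tau>"
  shows "\<exists>L. ((\<lambda>x. g x * p) has_derivative L) (at x) \<and> clin \<sigma> \<tau> L"
  using hdc_mult[OF assms(1,2) has_derivative_const clin_zero assms(3)] by simp

lemma hdc_add:
  fixes f g :: "'x::real_normed_algebra \<Rightarrow> 'y::real_normed_algebra_1"
  assumes "(f has_derivative f') (at x)" "clin \<sigma> \<tau> f'" "(g has_derivative g') (at x)" "clin \<sigma> \<tau> g'"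
  shows "\<exists>L. ((\<lambda>x. f x + g x) has_derivative L) (at x) \<and> clin \<sigma> \<tau> L"
  using has_derivative_add[OF assms(1,3)] clin_add[OF assms(2,4)] by blast

lemma hdc_diff:
  fixes f g :: "'x::real_normed_algebra \<Rightarrow> 'y::real_normed_algebra_1"
  assumes "(f has_derivative f') (at x)" "clin \<sigma> \<tau> f'" "(g has_derivative g') (at x)" "clin \<sigma> \<tau> g'"
  shows "\<exists>L. ((\<lambda>x. f x - g x) has_derivative L) (at x) \<and> clin \<sigma> \<tau> L"
  using has_derivative_diff[OF assms(1,3)] clin_diff[OF assms(2,4)] by blast

lemma hdc_ainv:
  fixes f :: "'x::real_normed_algebra \<Rightarrow> 'y::{real_normed_algebra_1,banach}"
  assumes "(f has_derivative f') (at x)" "clin \<sigma> \<tau> f'" "cen \<tau>" "is_unit_el (f x)"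
  shows "\<exists>L. ((\<lambda>x. ainv (f x)) has_derivative L) (at x) \<and> clin \<sigma> \<tau> L"
  using has_derivative_compose[OF assms(1) ainv_deriv[OF assms(4)]]
    clin_minus[OF clin_rmul[OF clin_lmul[OF assms(3,2), of "ainv (f x)"], of "ainv (f x)"]]
  by blast

lemma hdc_lin:
  fixes f :: "'x::real_normed_algebra \<Rightarrow> 'y::real_normed_algebra"
  assumes "(f has_derivative f') (at x)" "clin \<sigma> \<tau> f'" "bounded_linear T" "\<And>c v. T (\<tau> c * v) = \<rho> c * T v"
  shows "\<exists>L. ((\<lambda>x. T (f x)) has_derivative L) (at x) \<and> clin \<sigma> \<rho> L"
  using bounded_linear.has_derivative[OF assms(3,1)] assms(2,4) unfolding clin_def by auto

lemma existence:
  fixes \<kappa> :: "complex \<Rightarrow> 'b::{real_normed_algebra_1, banach}"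
    and \<iota> :: "'b \<Rightarrow> 'a::{real_normed_algebra_1, banach}"
    and E :: "'a \<Rightarrow> 'b" and a :: 'a and G :: "'b \<Rightarrow> 'b"
  assumes B_complex: "complex_structure \<kappa>"
    and A_complex: "complex_structure (\<iota> \<circ> \<kappa>)"
    and iota_lin: "bounded_linear \<iota>"
    and iota_isom: "\<And>b. norm (\<iota> b) = norm b"
    and iota_mult: "\<And>b1 b2. \<iota> (b1 * b2) = \<iota> b1 * \<iota> b2"
    and iota_one: "\<iota> 1 = 1"
    and E_lin: "bounded_linear E"
    and E_proj: "\<And>b. E (\<iota> b) = b"
    and E_bimod: "\<And>b1 b2 x. E (\<iota> b1 * x * \<iota> b2) = b1 * E x * b2"
    and V0: "0 \<in> V" and Vh: "holo_on \<kappa> G V"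
    and G_zero: "G 0 = 0"
    and G_right_inv: "eventually (\<lambda>b. norm (G b) * norm a < 1 \<and> cauchy_tr \<iota> E a (G b) = b) (nhds 0)"
  shows "\<exists>R U. 0 \<in> U \<and> holo_on \<kappa> R U \<and> eventually (\<lambda>b. R_rel G R b) (nhds 0)"
proof -
  have cenB: "cen \<kappa>" using B_complex unfolding complex_structure_def cen_def by blast
  have cenA: "cen (\<lambda>c. \<iota> (\<kappa> c))" using A_complex unfolding complex_structure_def cen_def by auto
  have Ebm: "E (\<iota> (\<kappa> c) * x) = \<kappa> c * E x" for c x using E_bimod[of "\<kappa> c" x 1] iota_one by simp
  have iota0: "\<iota> 0 = 0" using linear_simps(3)[OF iota_lin] .
  have Eadd: "E (x + y) = E x + E y" for x y using linear_simps(1)[OF E_lin] .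
  have unit1: "is_unit_el (1::'a)" using ainv_unique(1)[of "1::'a" 1] by simp
  define Y where "Y w = ainv (1 - \<iota> w * a)" for w
  define F where "F w = E (a * Y w)" for w
  define R where "R b = ainv (1 + F (G b) * G b) * F (G b)" for b
  have Vopen: "open V" and Vd: "\<forall>x\<in>V. \<exists>L. (G has_derivative L) (at x) \<and> (\<forall>c v. L (\<kappa> c * v) = \<kappa> c * L v)"
    using Vh unfolding holo_on_def by auto
  have unitY: "is_unit_el (1 - \<iota> w * a)" if "norm w * norm a < 1" for w
  proof -
    have "norm (\<iota> w * a) \<le> norm w * norm a" using norm_mult_ineq[of "\<iota> w" a] iota_isom by simp
    then show ?thesis using neumann(1)[of "\<iota> w * a"] that by simp
  qed
  have unitP: "is_unit_el (1 + z)" if "norm z < 1" for z :: 'b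
    using neumann(1)[of "-z"] that by simp
  have cauchy: "cauchy_tr \<iota> E a w = w + w * F w * w" if "norm w * norm a < 1" for w
  proof -
    note p = ainv_props[OF unitY[OF that]]
    have "(1 - \<iota> w * a) * Y w = 1" using p(1) unfolding Y_def .
    then have "Y w - \<iota> w * (a * Y w) = 1" by (simp add: left_diff_distrib mult.assoc)
    then have Yeq: "Y w = 1 + \<iota> w * (a * Y w)" by (simp only: diff_eq_eq)
    from Yeq have "Y w * \<iota> w = (1 + \<iota> w * (a * Y w)) * \<iota> w" by (rule arg_cong[where f="\<lambda>z. z * \<iota> w"])
    then have "Y w * \<iota> w = \<iota> w + \<iota> w * (a * Y w) * \<iota> w" by (simp add: distrib_right)
    then have "E (Y w * \<iota> w) = E (\<iota> w) + E (\<iota> w * (a * Y w) * \<iota> w)" using Eadd by simp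
    also have "\<dots> = w + w * F w * w" unfolding F_def using E_proj E_bimod by simp
    finally show ?thesis unfolding cauchy_tr_def Y_def by simp
  qed
  obtain L0 where "(G has_derivative L0) (at 0)" using Vd V0 by blast
  then have cG: "isCont G 0" using has_derivative_continuous by blast
  have ci: "isCont \<iota> x" for x using linear_continuous_at[OF iota_lin] .
  have cE: "isCont E x" for x using linear_continuous_at[OF E_lin] .
  have cY: "isCont Y 0"
    unfolding Y_def
  proof (rule isCont_o2[where f="\<lambda>w. 1 - \<iota> w * a" and g=ainv])
    show "isCont (\<lambda>w. 1 - \<iota> w * a) 0" by (intro continuous_intros ci)
    show "isCont ainv (1 - \<iota> 0 * a)" using ainv_cont[OF unit1] iota0 by simp
  qed
  have cF: "isCont F 0"
    unfolding F_def by (rule isCont_o2[OF isCont_mult[OF continuous_const cY] cE])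
  have cF': "isCont F (G 0)" using cF G_zero by simp
  have cFG: "isCont (\<lambda>b. F (G b)) 0" by (rule isCont_o2[OF cG cF'])
  have cP: "isCont (\<lambda>b. F (G b) * G b) 0" by (rule isCont_mult[OF cFG cG])
  have cQ: "isCont (\<lambda>b. G b * F (G b)) 0" by (rule isCont_mult[OF cG cFG])
  have evP: "\<forall>\<^sub>F b in nhds 0. norm (F (G b) * G b) < 1"
  proof -
    have "((\<lambda>b. F (G b) * G b) \<longlongrightarrow> 0) (at 0)" using cP G_zero unfolding isCont_def by simp
    then have "((\<lambda>b. norm (F (G b) * G b)) \<longlongrightarrow> 0) (at 0)" by (rule tendsto_norm_zero)
    then have "\<forall>\<^sub>F b in at 0. norm (F (G b) * G b) < 1" by (rule order_tendstoD(2)) simp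
    then show ?thesis unfolding eventually_nhds_conv_at using G_zero by simp
  qed
  have evQ: "\<forall>\<^sub>F b in nhds 0. norm (G b * F (G b)) < 1"
  proof -
    have "((\<lambda>b. G b * F (G b)) \<longlongrightarrow> 0) (at 0)" using cQ G_zero unfolding isCont_def by simp
    then have "((\<lambda>b. norm (G b * F (G b))) \<longlongrightarrow> 0) (at 0)" by (rule tendsto_norm_zero)
    then have "\<forall>\<^sub>F b in at 0. norm (G b * F (G b)) < 1" by (rule order_tendstoD(2)) simp
    then show ?thesis unfolding eventually_nhds_conv_at using G_zero by simp
  qed
  define Good where "Good b \<longleftrightarrow> (norm (G b) * norm a < 1 \<and> cauchy_tr \<iota> E a (G b) = b)
     \<and> norm (F (G b) * G b) < 1 \<and> norm (G b * F (G b)) < 1" for b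
  have evG: "eventually Good (nhds 0)"
    unfolding Good_def using eventually_conj[OF G_right_inv eventually_conj[OF evP evQ]] .
  then obtain S where S: "open S" "0 \<in> S" "\<forall>b\<in>S. Good b" unfolding eventually_nhds by blast
  have relR: "R_rel G R b" if "Good b" for b
  proof -
    define w where "w = G b"
    have g: "norm w * norm a < 1" "cauchy_tr \<iota> E a w = b" "norm (F w * w) < 1" "norm (w * F w) < 1"
      using that unfolding Good_def w_def by auto
    have be: "b = w + w * F w * w" using cauchy[OF g(1)] g(2) by simp
    note ra = rel_alg[OF be unitP[OF g(3)] unitP[OF g(4)]]
    have Rb: "R b = ainv (1 + F w * w) * F w" unfolding R_def w_def ..
    show ?thesis unfolding R_rel_def Rb using ra unfolding w_def by simp
  qed
  have hol: "holo_on \<kappa> R (S \<inter> V)"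
    unfolding holo_on_def
  proof (intro conjI ballI)
    show "open (S \<inter> V)" using S(1) Vopen by blast
    fix b assume bU: "b \<in> S \<inter> V"
    then have gb: "Good b" using S(3) by blast
    obtain LG where LG: "(G has_derivative LG) (at b)" "\<forall>c v. LG (\<kappa> c * v) = \<kappa> c * LG v"
      using Vd bU by blast
    have cLG: "clin \<kappa> \<kappa> LG" using LG(2) unfolding clin_def .
    have cE: "clin \<kappa> \<kappa> (\<lambda>h. E (f h))" if "clin \<kappa> (\<lambda>c. \<iota> (\<kappa> c)) f" for f
      using that Ebm unfolding clin_def by simp
    have cI: "clin \<kappa> (\<lambda>c. \<iota> (\<kappa> c)) (\<lambda>h. \<iota> (f h))" if "clin \<kappa> \<kappa> f" for f
      using that iota_mult unfolding clin_def by simp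
    have u1: "is_unit_el (1 - \<iota> (G b) * a)" using unitY gb unfolding Good_def by blast
    have u2: "is_unit_el (1 + E (a * ainv (1 - \<iota> (G b) * a)) * G b)"
      using unitP gb unfolding Good_def F_def Y_def by blast
    have Req: "R = (\<lambda>x. ainv (1 + E (a * ainv (1 - \<iota> (G x) * a)) * G x) * E (a * ainv (1 - \<iota> (G x) * a)))"
      unfolding R_def F_def Y_def ..
    have Ia: "\<iota> (\<kappa> c * v) = \<iota> (\<kappa> c) * \<iota> v" for c v by (rule iota_mult)
    obtain L1 where L1: "((\<lambda>x. \<iota> (G x)) has_derivative L1) (at b)" "clin \<kappa> (\<lambda>c. \<iota> (\<kappa> c)) L1"
      using hdc_lin[OF LG(1) cLG iota_lin Ia] by blast
    obtain L2 where L2: "((\<lambda>x. \<iota> (G x) * a) has_derivative L2) (at b)" "clin \<kappa> (\<lambda>c. \<iota> (\<kappa> c)) L2"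
      using hdc_rconst[OF L1 cenA] by blast
    obtain L3 where L3: "((\<lambda>x. 1 - \<iota> (G x) * a) has_derivative L3) (at b)" "clin \<kappa> (\<lambda>c. \<iota> (\<kappa> c)) L3"
      using hdc_diff[OF has_derivative_const clin_zero L2] by blast
    obtain L4 where L4: "((\<lambda>x. ainv (1 - \<iota> (G x) * a)) has_derivative L4) (at b)" "clin \<kappa> (\<lambda>c. \<iota> (\<kappa> c)) L4"
      using hdc_ainv[OF L3 cenA] u1 by blast
    obtain L5 where L5: "((\<lambda>x. a * ainv (1 - \<iota> (G x) * a)) has_derivative L5) (at b)" "clin \<kappa> (\<lambda>c. \<iota> (\<kappa> c)) L5"
      using hdc_lconst[OF L4 cenA] by blast
    obtain L6 where L6: "((\<lambda>x. E (a * ainv (1 - \<iota> (G x) * a))) has_derivative L6) (at b)" "clin \<kappa> \<kappa> L6"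
      using hdc_lin[OF L5 E_lin Ebm] by blast
    obtain L7 where L7: "((\<lambda>x. E (a * ainv (1 - \<iota> (G x) * a)) * G x) has_derivative L7) (at b)" "clin \<kappa> \<kappa> L7"
      using hdc_mult[OF L6 LG(1) cLG cenB] by blast
    obtain L8 where L8: "((\<lambda>x. 1 + E (a * ainv (1 - \<iota> (G x) * a)) * G x) has_derivative L8) (at b)" "clin \<kappa> \<kappa> L8"
      using hdc_add[OF has_derivative_const clin_zero L7] by blast
    obtain L9 where L9: "((\<lambda>x. ainv (1 + E (a * ainv (1 - \<iota> (G x) * a)) * G x)) has_derivative L9) (at b)" "clin \<kappa> \<kappa> L9"
      using hdc_ainv[OF L8 cenB] u2 by blast
    have "\<exists>L. ((\<lambda>x. ainv (1 + E (a * ainv (1 - \<iota> (G x) * a)) * G x) * E (a * ainv (1 - \<iota> (G x) * a))) has_derivative L) (at b) \<and> clin \<kappa> \<kappa> L"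
      using hdc_mult[OF L9 L6 cenB] .
    then have "\<exists>L. (R has_derivative L) (at b) \<and> clin \<kappa> \<kappa> L" unfolding Req .
    then show "\<exists>L. (R has_derivative L) (at b) \<and> (\<forall>c v. L (\<kappa> c * v) = \<kappa> c * L v)"
      unfolding clin_def .
  qed
  show ?thesis
  proof (intro exI conjI)
    show "0 \<in> S \<inter> V" using S(2) V0 by blast
    show "holo_on \<kappa> R (S \<inter> V)" by (rule hol)
    show "\<forall>\<^sub>F b in nhds 0. R_rel G R b" using evG by (rule eventually_mono) (rule relR)
  qed
qed




lemma uniq_core:
  fixes \<kappa> :: "complex \<Rightarrow> 'b::{real_normed_algebra_1,banach}" and D :: "'b \<Rightarrow> 'b"
  assumes B: "complex_structure \<kappa>" and dpos: "\<delta> > 0"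
    and hol: "\<And>y. norm y < \<delta> \<Longrightarrow> \<exists>L. (D has_derivative L) (at y) \<and> (\<forall>c v. L (\<kappa> c * v) = \<kappa> c * L v)"
    and zer: "\<And>y. norm y < \<delta> \<Longrightarrow> is_unit_el y \<Longrightarrow> D y = 0"
    and x: "norm x < \<delta> / 2"
  shows "D x = 0"
proof -
  note k = kap_facts[OF B]
  have kbl: "bounded_linear \<kappa>" by (rule kap_bl[OF B])
  obtain l :: "'b \<Rightarrow> real" where l: "bounded_linear l" "l (D x) = norm (D x)"
    using hahn_banach_norming by blast
  define \<Lambda> where "\<Lambda> = (\<lambda>z. complex_of_real (l z) - \<i> * complex_of_real (l (\<kappa> \<i> * z)))"
  note fc0 = functional_C[OF B l(1)]
  have \<Lambda>bl: "bounded_linear \<Lambda>" unfolding \<Lambda>_def by (rule fc0(1))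
  have fc2: "\<Lambda> (\<kappa> t * z) = t * \<Lambda> z" for t z unfolding \<Lambda>_def by (rule fc0(2))
  have fc3: "Re (\<Lambda> z) = l z" for z unfolding \<Lambda>_def by (rule fc0(3))
  have \<Lambda>0: "\<Lambda> 0 = 0" by (rule linear_simps(3)[OF \<Lambda>bl])
  define r where "r = \<delta> / 2"
  have r0: "r > 0" using dpos r_def by simp
  have nyb: "norm (x + \<kappa> s) < \<delta>" if "cmod s < r" for s
  proof -
    have "norm (x + \<kappa> s) \<le> norm x + cmod s" using norm_triangle_ineq[of x "\<kappa> s"] k(7)[of s] by simp
    also have "\<dots> < \<delta>" using that x r_def by simp
    finally show ?thesis .
  qed
  define h where "h s = \<Lambda> (D (x + \<kappa> s))" for s
  have hol_h: "h holomorphic_on ball 0 r"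
    unfolding holomorphic_on_def
  proof
    fix s :: complex assume s: "s \<in> ball 0 r"
    have ny: "norm (x + \<kappa> s) < \<delta>" using nyb s by simp
    obtain L where L: "(D has_derivative L) (at (x + \<kappa> s))" "\<forall>c v. L (\<kappa> c * v) = \<kappa> c * L v"
      using hol[OF ny] by blast
    have d0: "((\<lambda>s. x + \<kappa> s) has_derivative (\<lambda>h. 0 + \<kappa> h)) (at s)"
      by (rule has_derivative_add[OF has_derivative_const bounded_linear_imp_has_derivative[OF kbl]])
    have d1: "((\<lambda>s. D (x + \<kappa> s)) has_derivative (\<lambda>h. L (0 + \<kappa> h))) (at s)"
      by (rule has_derivative_compose[OF d0 L(1)])
    have d2: "(h has_derivative (\<lambda>h. \<Lambda> (L (0 + \<kappa> h)))) (at s)"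
      unfolding h_def by (rule bounded_linear.has_derivative[OF \<Lambda>bl d1])
    have eq: "(\<lambda>h. \<Lambda> (L (0 + \<kappa> h))) = (*) (\<Lambda> (L 1))"
    proof
      fix t
      have "L (\<kappa> t) = \<kappa> t * L 1" using L(2)[rule_format, of t 1] by simp
      then have "\<Lambda> (L (0 + \<kappa> t)) = t * \<Lambda> (L 1)" using fc2[of t "L 1"] by simp
      then show "\<Lambda> (L (0 + \<kappa> t)) = \<Lambda> (L 1) * t" by (simp only: mult.commute)
    qed
    have "(h has_field_derivative \<Lambda> (L 1)) (at s)"
      unfolding has_field_derivative_def using d2 unfolding eq .
    then show "h field_differentiable at s within ball 0 r"
      unfolding field_differentiable_def using has_field_derivative_at_within by blast
  qed
  define m where "m = (norm x + r) / 2"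
  define \<rho> where "\<rho> = (r - norm x) / 2"
  have \<rho>0: "\<rho> > 0" using x r_def \<rho>_def by simp
  have mpos: "m > 0" unfolding m_def using norm_ge_zero[of x] r0 by (intro divide_pos_pos add_nonneg_pos) auto
  define \<xi> where "\<xi> = complex_of_real m"
  have cxi: "cmod \<xi> = m" unfolding \<xi>_def using mpos by simp
  have ann: "norm x < cmod s \<and> cmod s < r" if "s \<in> ball \<xi> \<rho>" for s
  proof -
    have d: "cmod (\<xi> - s) < \<rho>" using that by (simp add: dist_norm)
    have "cmod \<xi> \<le> cmod s + cmod (\<xi> - s)" using norm_triangle_ineq[of s "\<xi> - s"] by simp
    moreover have "cmod s \<le> cmod \<xi> + cmod (\<xi> - s)" using norm_triangle_ineq4[of \<xi> "\<xi> - s"] by simp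
    moreover have "2 * m = norm x + r" "2 * \<rho> = r - norm x" unfolding m_def \<rho>_def by simp_all
    ultimately show ?thesis using d cxi by (intro conjI; linarith)
  qed
  have zU: "h s = 0" if "s \<in> ball \<xi> \<rho>" for s
  proof -
    have a1: "norm x < cmod s" and a2: "cmod s < r" using ann[OF that] by auto
    have uy: "is_unit_el (x + \<kappa> s)" by (rule unit_shift[OF B a1])
    have ny: "norm (x + \<kappa> s) < \<delta>" by (rule nyb[OF a2])
    show ?thesis unfolding h_def using zer[OF ny uy] \<Lambda>0 by simp
  qed
  have sub: "ball \<xi> \<rho> \<subseteq> ball 0 r" using ann by auto
  have xin: "\<xi> \<in> ball 0 r" using cxi unfolding m_def using x r_def by simp
  have lim: "\<xi> islimpt ball \<xi> \<rho>" using islimpt_ball \<rho>0 by auto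
  have z0: "(0::complex) \<in> ball 0 r" using r0 by simp
  have "h 0 = 0"
    by (rule analytic_continuation[OF hol_h open_ball convex_connected[OF convex_ball] sub xin lim zU z0])
  then have "\<Lambda> (D x) = 0" unfolding h_def using k(6) by simp
  then have "Re (\<Lambda> (D x)) = 0" by simp
  then have "l (D x) = 0" using fc3 by simp
  then show ?thesis using l(2) by simp
qed


theorem mainTheorem12:
  fixes \<kappa> :: "complex \<Rightarrow> 'b::{real_normed_algebra_1, banach}"
    and \<iota> :: "'b \<Rightarrow> 'a::{real_normed_algebra_1, banach}"
    and E :: "'a \<Rightarrow> 'b"
    and a :: 'a
    and G :: "'b \<Rightarrow> 'b"
  assumes B_complex: "complex_structure \<kappa>"
    and A_complex: "complex_structure (\<iota> \<circ> \<kappa>)"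
    and iota_lin: "bounded_linear \<iota>"
    and iota_isom: "\<And>b. norm (\<iota> b) = norm b"
    and iota_mult: "\<And>b1 b2. \<iota> (b1 * b2) = \<iota> b1 * \<iota> b2"
    and iota_one: "\<iota> 1 = 1"
    and E_lin: "bounded_linear E"
    and E_proj: "\<And>b. E (\<iota> b) = b"
    and E_bimod: "\<And>b1 b2 x. E (\<iota> b1 * x * \<iota> b2) = b1 * E x * b2"
    and G_holo: "\<exists>V. 0 \<in> V \<and> holo_on \<kappa> G V"
    and G_zero: "G 0 = 0"
    and G_right_inv: "eventually (\<lambda>b. norm (G b) * norm a < 1 \<and> cauchy_tr \<iota> E a (G b) = b) (nhds 0)"
    and G_left_inv: "eventually (\<lambda>b. norm b * norm a < 1 \<and> G (cauchy_tr \<iota> E a b) = b) (nhds 0)"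
  shows "(\<exists>R U. 0 \<in> U \<and> holo_on \<kappa> R U \<and> eventually (\<lambda>b. R_rel G R b) (nhds 0))
       \<and> (\<forall>R1 R2 U1 U2. 0 \<in> U1 \<and> holo_on \<kappa> R1 U1 \<and> eventually (\<lambda>b. R_rel G R1 b) (nhds 0)
            \<and> 0 \<in> U2 \<and> holo_on \<kappa> R2 U2 \<and> eventually (\<lambda>b. R_rel G R2 b) (nhds 0)
            \<longrightarrow> eventually (\<lambda>b. R1 b = R2 b) (nhds 0))"
proof (rule conjI)
  obtain V where V: "0 \<in> V" "holo_on \<kappa> G V" using G_holo by blast
  show "\<exists>R U. 0 \<in> U \<and> holo_on \<kappa> R U \<and> eventually (\<lambda>b. R_rel G R b) (nhds 0)"
    by (rule existence[OF B_complex A_complex iota_lin iota_isom iota_mult iota_one E_lin E_proj E_bimod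
          V(1) V(2) G_zero G_right_inv])
next
  show "\<forall>R1 R2 U1 U2. 0 \<in> U1 \<and> holo_on \<kappa> R1 U1 \<and> eventually (\<lambda>b. R_rel G R1 b) (nhds 0)
            \<and> 0 \<in> U2 \<and> holo_on \<kappa> R2 U2 \<and> eventually (\<lambda>b. R_rel G R2 b) (nhds 0)
            \<longrightarrow> eventually (\<lambda>b. R1 b = R2 b) (nhds 0)"
  proof (intro allI impI)
    fix R1 R2 U1 U2
    assume as: "0 \<in> U1 \<and> holo_on \<kappa> R1 U1 \<and> eventually (\<lambda>b. R_rel G R1 b) (nhds 0)
            \<and> 0 \<in> U2 \<and> holo_on \<kappa> R2 U2 \<and> eventually (\<lambda>b. R_rel G R2 b) (nhds 0)"
    then have U10: "0 \<in> U1" and h1: "holo_on \<kappa> R1 U1" and ev1: "eventually (\<lambda>b. R_rel G R1 b) (nhds 0)"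
      and U20: "0 \<in> U2" and h2: "holo_on \<kappa> R2 U2" and ev2: "eventually (\<lambda>b. R_rel G R2 b) (nhds 0)"
      by auto
    have o1: "open U1" and d1: "\<forall>x\<in>U1. \<exists>L. (R1 has_derivative L) (at x) \<and> (\<forall>c v. L (\<kappa> c * v) = \<kappa> c * L v)"
      using h1 unfolding holo_on_def by auto
    have o2: "open U2" and d2: "\<forall>x\<in>U2. \<exists>L. (R2 has_derivative L) (at x) \<and> (\<forall>c v. L (\<kappa> c * v) = \<kappa> c * L v)"
      using h2 unfolding holo_on_def by auto
    have "eventually (\<lambda>b. R_rel G R1 b \<and> R_rel G R2 b) (nhds 0)" using eventually_conj[OF ev1 ev2] .
    then obtain d where d: "d > 0" "\<forall>x. dist x 0 < d \<longrightarrow> R_rel G R1 x \<and> R_rel G R2 x"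
      unfolding eventually_nhds_metric by blast
    have "open (U1 \<inter> U2)" using o1 o2 by blast
    moreover have "0 \<in> U1 \<inter> U2" using U10 U20 by blast
    ultimately obtain e where e: "e > 0" "ball 0 e \<subseteq> U1 \<inter> U2" unfolding open_contains_ball by blast
    define \<delta> where "\<delta> = min d e"
    have dpos: "\<delta> > 0" using d(1) e(1) \<delta>_def by simp
    define D where "D b = R1 b - R2 b" for b
    have hol: "\<exists>L. (D has_derivative L) (at y) \<and> (\<forall>c v. L (\<kappa> c * v) = \<kappa> c * L v)" if "norm y < \<delta>" for y
    proof -
      have "y \<in> ball 0 e" using that \<delta>_def by simp
      then have yU: "y \<in> U1" "y \<in> U2" using e(2) by auto
      obtain L1 where L1: "(R1 has_derivative L1) (at y)" "\<forall>c v. L1 (\<kappa> c * v) = \<kappa> c * L1 v" using d1 yU(1) by blast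
      obtain L2 where L2: "(R2 has_derivative L2) (at y)" "\<forall>c v. L2 (\<kappa> c * v) = \<kappa> c * L2 v" using d2 yU(2) by blast
      have "(D has_derivative (\<lambda>h. L1 h - L2 h)) (at y)"
        unfolding D_def by (rule has_derivative_diff[OF L1(1) L2(1)])
      moreover have "\<forall>c v. L1 (\<kappa> c * v) - L2 (\<kappa> c * v) = \<kappa> c * (L1 v - L2 v)"
        using L1(2) L2(2) by (simp add: right_diff_distrib)
      ultimately show ?thesis by blast
    qed
    have zer: "D y = 0" if "norm y < \<delta>" "is_unit_el y" for y
    proof -
      have "dist y 0 < d" using that(1) \<delta>_def by simp
      then have "R_rel G R1 y" "R_rel G R2 y" using d(2) by auto
      then have "R1 y = R2 y" using rel_unique that(2) by blast
      then show ?thesis unfolding D_def by simp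
    qed
    have "\<forall>x. dist x 0 < \<delta> / 2 \<longrightarrow> R1 x = R2 x"
    proof (intro allI impI)
      fix x :: 'b assume "dist x 0 < \<delta> / 2"
      then have nx: "norm x < \<delta> / 2" by simp
      have "D x = 0" by (rule uniq_core[OF B_complex dpos hol zer nx])
      then show "R1 x = R2 x" unfolding D_def by simp
    qed
    then show "eventually (\<lambda>b. R1 b = R2 b) (nhds 0)"
      unfolding eventually_nhds_metric using dpos by (intro exI[of _ "\<delta> / 2"]) simp
  qed
qed

end
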